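(* Let $\varepsilon>0$, let $k:\mathbb{R}\to\mathbb{R}$ be $C^1$ with $k^{-1}(0)=\{0\}$ and $k'(0)>0$, and let $b_0,b_1,c:\mathbb{R}\to\mathbb{R}$ be $C^\infty$ with $b_1>0$, $b_1'<0$, $c>0$ and $c'(u)/c(u)>b_1'(u)/b_1(u)$ for all $u$. Put $b(u,a)=b_0(u)-ab_1(u)$, $h(u,a)=b(u,a)/c(u)$, and assume that for every $a\in\mathbb{R}$ the function $h(\cdot,a)$ has finitely many critical points, all isolated, and that $h(u,a)\to-\infty$ as $|u|\to\infty$ for every $a\ge 0$. Consider for each $a\in\mathbb{R}$ the reduced vector field $\widetilde f(\cdot,a)$ on $\mathbb{R}^2$, $$\widetilde f((u,n),a)=\Big(\varepsilon\big(\partial_u b(u,a)-c'(u)n\big),\ \tfrac{1}{\widetilde{k}(n)}\big(b(u,a)-c(u)n\big)\Big),$$ with $\widetilde{k}(n)=k(n)/n$ for $n\ne0$, $\widetilde k(0)=k'(0)$, and its flow $\widetilde{\phi}^a$. Let $\mathcal{P}=\{(x,a)\in\mathbb{R}^2\times\mathbb{R}\mid \widetilde f(x,a)=0\}=\{((u,n),a)\mid a=a_\star(u),\ n=h_\star(u)\}$, where $a_\star$ is the smooth function with $\partial_u h(u,a_\star(u))=0$ and $h_\star(u)=h(u,a_\star(u))$. Then $\mathcal{P}$ is partitioned into $$\mathcal{P}^{\mathrm{stab}}=\{(x,a)\in\mathcal P\mid a_\star'(u)>0\}\neq\emptyset,\quad \mathcal{P}^{\mathrm{unst}}=\{(x,a)\in\mathcal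 P\mid a_\star'(u)<0\},\quad \mathcal{P}^{\mathrm{bif}}=\{(x,a)\in\mathcal P\mid a_\star'(u)=0\},$$ where for $(x,a)\in\mathcal P^{\mathrm{stab}}$ the point $x$ is a stable node of $\widetilde{\phi}^{a}$, for $(x,a)\in\mathcal P^{\mathrm{unst}}$ it is a saddle of $\widetilde{\phi}^a$, and for $(x,a)\in\mathcal P^{\mathrm{bif}}$ it is an isolated nonhyperbolic equilibrium of $\widetilde\phi^a$. Moreover the subset $\{((u,n),a)\in\mathcal P^{\mathrm{bif}}\mid a_\star''(u)\neq0\}$ consists of generic fold (saddle-node) bifurcation points of the one-parameter family of flows $\widetilde{\phi}^{a}$.
   Context: Primes denote derivatives with respect to $u$. Explicitly, $a_\star(u)=\dfrac{b_0'(u)c(u)-b_0(u)c'(u)}{b_1'(u)c(u)-b_1(u)c'(u)}$, the denominator being nonzero by the assumption $c'/c>b_1'/b_1$. *)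

theory Defs
  imports "HOL-Analysis.Analysis"
begin

definition smooth_fun :: "(real \<Rightarrow> real) \<Rightarrow> bool" where
  "smooth_fun f \<longleftrightarrow> (\<forall>m x. ((deriv ^^ m) f) differentiable (at x))"

definition C1_fun :: "(real \<Rightarrow> real) \<Rightarrow> bool" where
  "C1_fun f \<longleftrightarrow> (\<forall>x. f differentiable (at x)) \<and> continuous_on UNIV (deriv f)"

definition eig2 :: "(real \<times> real \<Rightarrow> real \<times> real) \<Rightarrow> complex \<Rightarrow> bool" where
  "eig2 L lam \<longleftrightarrow> (\<exists>v1 v2 :: complex. (v1, v2) \<noteq> (0, 0) \<and>
     of_real (fst (L (1, 0))) * v1 + of_real (fst (L (0, 1))) * v2 = lam * v1 \<and>
     of_real (snd (L (1, 0))) * v1 + of_real (snd (L (0, 1))) * v2 = lam * v2)"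

definition dot2 :: "real \<times> real \<Rightarrow> real \<times> real \<Rightarrow> real" where
  "dot2 p q = fst p * fst q + snd p * snd q"

definition stable_node :: "(real \<times> real \<Rightarrow> real \<times> real) \<Rightarrow> real \<times> real \<Rightarrow> bool" where
  "stable_node V x \<longleftrightarrow> V x = 0 \<and>
     (\<exists>L. (V has_derivative L) (at x) \<and> (\<forall>lam. eig2 L lam \<longrightarrow> Im lam = 0 \<and> Re lam < 0))"

definition saddle :: "(real \<times> real \<Rightarrow> real \<times> real) \<Rightarrow> real \<times> real \<Rightarrow> bool" where
  "saddle V x \<longleftrightarrow> V x = 0 \<and>
     (\<exists>L. (V has_derivative L) (at x) \<and>
        (\<exists>lam mu. eig2 L lam \<and> eig2 L mu \<and> Im lam = 0 \<and> Im mu = 0 \<and> Re lam < 0 \<and> Re mu > 0))"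

definition isolated_nonhyperbolic_eq :: "(real \<times> real \<Rightarrow> real \<times> real) \<Rightarrow> real \<times> real \<Rightarrow> bool" where
  "isolated_nonhyperbolic_eq V x \<longleftrightarrow> V x = 0 \<and>
     (\<exists>e>0. \<forall>y. y \<noteq> x \<and> dist y x < e \<longrightarrow> V y \<noteq> 0) \<and>
     (\<exists>L. (V has_derivative L) (at x) \<and> (\<exists>lam. eig2 L lam \<and> Re lam = 0))"

text \<open>Generic fold (saddle-node) bifurcation point (x0,a0) of the one-parameter family of
  planar vector fields F(.,a) (Kuznetsov's conditions): equilibrium; the Jacobian has a simple
  eigenvalue 0 and no other eigenvalue on the imaginary axis; with right/left null vectors q, p,
  p.q = 1, the quadratic coefficient p.B(q,q) (B(q,q) = second derivative of F along q) is
  nonzero, and the transversality coefficient p.F_a is nonzero.\<close>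
definition generic_fold :: "(real \<times> real \<Rightarrow> real \<Rightarrow> real \<times> real) \<Rightarrow> real \<times> real \<Rightarrow> real \<Rightarrow> bool" where
  "generic_fold F x0 a0 \<longleftrightarrow> F x0 a0 = 0 \<and>
     (\<exists>L. ((\<lambda>x. F x a0) has_derivative L) (at x0) \<and>
        eig2 L 0 \<and> (\<exists>mu. eig2 L mu \<and> mu \<noteq> 0) \<and> (\<forall>mu. eig2 L mu \<longrightarrow> mu = 0 \<or> Re mu \<noteq> 0) \<and>
        (\<exists>p q. q \<noteq> 0 \<and> L q = 0 \<and> (\<forall>w. dot2 p (L w) = 0) \<and> dot2 p q = 1 \<and>
           (\<exists>g1 B e. e > 0 \<and>
              (\<forall>s. \<bar>s\<bar> < e \<longrightarrow> ((\<lambda>s. F (x0 + s *\<^sub>R q) a0) has_vector_derivative g1 s) (at s)) \<and>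
              (g1 has_vector_derivative B) (at 0) \<and> dot2 p B \<noteq> 0) \<and>
           (\<exists>Fa. ((\<lambda>a. F x0 a) has_vector_derivative Fa) (at a0) \<and> dot2 p Fa \<noteq> 0)))"

end

theory Submission
  imports Defs
begin

lemma has_derivative_mult_cont_zero:
  fixes g m :: "'a::real_normed_vector \<Rightarrow> real"
  assumes g: "(g has_derivative g') (at x)" and gx: "g x = 0" and m: "isCont m x"
  shows "((\<lambda>y. g y * m y) has_derivative (\<lambda>h. g' h * m x)) (at x)"
proof -
  have bl: "bounded_linear g'" using g by (rule has_derivative_bounded_linear)
  then obtain K where K: "K > 0" "\<And>h. norm (g' h) \<le> norm h * K"
    using bounded_linear.pos_bounded by blast
  have R: "((\<lambda>y. norm (g y - g x - g' (y - x)) / norm (y - x)) \<longlongrightarrow> 0) (at x)"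
    using g by (simp add: has_derivative_iff_norm)
  have mm: "(m \<longlongrightarrow> m x) (at x)" using m by (simp add: isCont_def)
  have lim2: "((\<lambda>y. norm (g y - g x - g' (y - x)) / norm (y - x) * \<bar>m y\<bar> + K * \<bar>m y - m x\<bar>) \<longlongrightarrow> 0 * \<bar>m x\<bar> + K * \<bar>m x - m x\<bar>) (at x)"
    by (intro tendsto_intros R mm)
  have ineq: "norm (g y * m y - g x * m x - g' (y - x) * m x) / norm (y - x)
      \<le> norm (g y - g x - g' (y - x)) / norm (y - x) * \<bar>m y\<bar> + K * \<bar>m y - m x\<bar>" for y
  proof (cases "y = x")
    case True then show ?thesis using K by simp
  next
    case False
    hence ny: "norm (y - x) > 0" by simp
    have eq: "g y * m y - g x * m x - g' (y - x) * m x = (g y - g x - g' (y - x)) * m y + g' (y - x) * (m y - m x)"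
      using gx by (simp add: algebra_simps)
    have "norm (g y * m y - g x * m x - g' (y - x) * m x) \<le> \<bar>g y - g x - g' (y - x)\<bar> * \<bar>m y\<bar> + \<bar>g' (y - x)\<bar> * \<bar>m y - m x\<bar>"
      unfolding eq real_norm_def by (metis abs_mult abs_triangle_ineq)
    also have "\<dots> \<le> \<bar>g y - g x - g' (y - x)\<bar> * \<bar>m y\<bar> + (norm (y - x) * K) * \<bar>m y - m x\<bar>"
      using K(2)[of "y - x"] by (intro add_left_mono mult_right_mono) auto
    finally show ?thesis using ny
      by (simp add: divide_simps algebra_simps split: if_splits)
  qed
  have "((\<lambda>y. norm (g y * m y - g x * m x - g' (y - x) * m x) / norm (y - x)) \<longlongrightarrow> 0) (at x)"
  proof (rule tendsto_sandwich[where f="\<lambda>_. 0"])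
    show "\<forall>\<^sub>F y in at x. 0 \<le> norm (g y * m y - g x * m x - g' (y - x) * m x) / norm (y - x)" by simp
    show "\<forall>\<^sub>F y in at x. norm (g y * m y - g x * m x - g' (y - x) * m x) / norm (y - x) \<le> norm (g y - g x - g' (y - x)) / norm (y - x) * \<bar>m y\<bar> + K * \<bar>m y - m x\<bar>"
      using ineq by simp
    show "((\<lambda>y. norm (g y - g x - g' (y - x)) / norm (y - x) * \<bar>m y\<bar> + K * \<bar>m y - m x\<bar>) \<longlongrightarrow> 0) (at x)"
      using lim2 by simp
  qed simp
  moreover have "bounded_linear (\<lambda>h. g' h * m x)"
    using bl by (rule bounded_linear_mult_const)
  ultimately show ?thesis by (simp add: has_derivative_iff_norm)
qed

lemma sm0: "smooth_fun f \<Longrightarrow> DERIV f x :> deriv f x"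
  unfolding smooth_fun_def by (metis DERIV_deriv_iff_real_differentiable funpow_0)
lemma sm1: "smooth_fun f \<Longrightarrow> DERIV (deriv f) x :> deriv (deriv f) x"
  unfolding smooth_fun_def by (metis DERIV_deriv_iff_real_differentiable funpow_0 funpow.simps(2) o_apply)
lemma sm2: "smooth_fun f \<Longrightarrow> DERIV (deriv (deriv f)) x :> deriv (deriv (deriv f)) x"
proof -
  assume "smooth_fun f"
  then have "((deriv ^^ 2) f) differentiable (at x)" unfolding smooth_fun_def by blast
  then show ?thesis by (simp add: numeral_2_eq_2 DERIV_deriv_iff_real_differentiable)
qed

lemma eig2_triD:
  assumes "eig2 (\<lambda>h. (A * fst h + B * snd h, C * snd h)) lam"
  shows "lam = complex_of_real A \<or> lam = complex_of_real C"
proof -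
  from assms obtain v1 v2 :: complex where nz: "(v1, v2) \<noteq> (0, 0)"
    and e1: "of_real A * v1 + of_real B * v2 = lam * v1"
    and e2: "of_real 0 * v1 + of_real C * v2 = lam * v2"
    unfolding eig2_def by auto
  show ?thesis
  proof (cases "v2 = 0")
    case True
    then have "v1 \<noteq> 0" using nz by auto
    then show ?thesis using e1 True by simp
  next
    case False
    then show ?thesis using e2 by simp
  qed
qed

lemma eig2_triA: "eig2 (\<lambda>h. (A * fst h + B * snd h, C * snd h)) (complex_of_real A)"
  unfolding eig2_def by (rule exI[of _ 1], rule exI[of _ 0]) simp

lemma eig2_triC:
  assumes "A \<noteq> C"
  shows "eig2 (\<lambda>h. (A * fst h + B * snd h, C * snd h)) (complex_of_real C)"
  unfolding eig2_def
proof (rule exI[of _ "complex_of_real (- B / (A - C))"], rule exI[of _ 1], intro conjI)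
  have "A - C \<noteq> 0" using assms by simp
  then show "of_real (fst (A * fst (1::real, 0::real) + B * snd (1::real, 0::real), C * snd (1::real, 0::real))) * complex_of_real (- B / (A - C)) +
    of_real (fst (A * fst (0::real, 1::real) + B * snd (0::real, 1::real), C * snd (0::real, 1::real))) * 1 =
    complex_of_real C * complex_of_real (- B / (A - C))"
    by (simp add: field_simps flip: of_real_mult of_real_add of_real_diff of_real_minus)
qed auto

lemma kt_facts:
  fixes k :: "real \<Rightarrow> real"
  assumes k_C1: "C1_fun k" and k_zero: "\<forall>x. k x = 0 \<longleftrightarrow> x = 0" and k'0: "deriv k 0 > 0"
  shows "isCont (\<lambda>n. if n = 0 then deriv k 0 else k n / n) x \<and> (\<lambda>n. if n = 0 then deriv k 0 else k n / n) x > 0"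
proof -
  define kt where "kt = (\<lambda>n::real. if n = 0 then deriv k 0 else k n / n)"
  have kd: "DERIV k y :> deriv k y" for y
    using k_C1 unfolding C1_fun_def by (simp add: DERIV_deriv_iff_real_differentiable)
  have kc: "isCont k y" for y using kd by (rule DERIV_isCont)
  have cont: "isCont kt y" for y
  proof (cases "y = 0")
    case True
    have "(\<lambda>h. (k (0 + h) - k 0) / h) \<midarrow>0\<rightarrow> deriv k 0" using kd[of 0] by (simp add: DERIV_def)
    moreover have "k 0 = 0" using k_zero by simp
    ultimately have "(\<lambda>h. k h / h) \<midarrow>0\<rightarrow> deriv k 0" by simp
    then have "kt \<midarrow>0\<rightarrow> kt 0"
      unfolding kt_def by (subst LIM_cong[where g="\<lambda>h. k h / h" and b=0 and m="deriv k 0"]) auto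
    then show ?thesis using True by (simp add: isCont_def)
  next
    case False
    have ev: "eventually (\<lambda>n. kt n = k n / n) (nhds y)"
      using t1_space_nhds[OF False] by eventually_elim (simp add: kt_def)
    have "isCont (\<lambda>n. k n / n) y" using False kc by (intro continuous_intros) auto
    then show ?thesis using isCont_cong[OF ev] by simp
  qed
  have nz: "kt y \<noteq> 0" for y using k_zero k'0 by (auto simp: kt_def)
  have pos: "kt y > 0" for y
  proof (rule ccontr)
    assume "\<not> kt y > 0"
    then have neg: "kt y < 0" using nz[of y] by linarith
    have k0: "kt 0 > 0" using k'0 by (simp add: kt_def)
    show False
    proof (cases "y \<ge> 0")
      case True
      obtain z where "0 \<le> z" "z \<le> y" "kt z = 0"
        using IVT2[of kt y 0 0] True neg k0 cont by force
      then show False using nz by blast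
    next
      case False
      obtain z where "y \<le> z" "z \<le> 0" "kt z = 0"
        using IVT[of kt y 0 0] False neg k0 cont by force
      then show False using nz by blast
    qed
  qed
  show ?thesis using cont pos unfolding kt_def by blast
qed

lemma comp_fst:
  fixes g :: "real \<Rightarrow> real" and p :: "real \<times> real"
  assumes "DERIV g (fst p) :> g'"
  shows "((\<lambda>x. g (fst x)) has_derivative (\<lambda>h. g' * fst h)) (at p)"
proof -
  have "((\<lambda>x. g (fst x)) has_derivative (\<lambda>h. fst h * g')) (at p)"
    by (rule DERIV_compose_FDERIV[where g=fst and g'=fst, OF assms]) (rule bounded_linear_imp_has_derivative[OF bounded_linear_fst])
  then show ?thesis by (simp add: mult.commute)
qed

lemma shiftD:
  fixes g :: "real \<Rightarrow> real"
  assumes "DERIV g (u + s) :> g'"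
  shows "DERIV (\<lambda>s. g (u + s)) s :> g'"
  using assms DERIV_shift[of g g' s u] by (simp add: add.commute)

theorem lemma2:
  fixes eps :: real and k b0 b1 c :: "real \<Rightarrow> real"
    and b h :: "real \<Rightarrow> real \<Rightarrow> real" and kt astar hstar :: "real \<Rightarrow> real"
    and f :: "real \<times> real \<Rightarrow> real \<Rightarrow> real \<times> real"
  assumes eps: "eps > 0"
    and k_C1: "C1_fun k" and k_zero: "\<forall>x. k x = 0 \<longleftrightarrow> x = 0" and k'0: "deriv k 0 > 0"
    and smooth: "smooth_fun b0" "smooth_fun b1" "smooth_fun c"
    and b1_pos: "\<forall>u. b1 u > 0" and b1'_neg: "\<forall>u. deriv b1 u < 0"
    and c_pos: "\<forall>u. c u > 0"
    and c_b1: "\<forall>u. deriv c u / c u > deriv b1 u / b1 u"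
    and b_def: "b = (\<lambda>u a. b0 u - a * b1 u)"
    and h_def: "h = (\<lambda>u a. b u a / c u)"
    and crit_fin: "\<forall>a. finite {u. deriv (\<lambda>v. h v a) u = 0}"
    and crit_iso: "\<forall>a. \<forall>u. deriv (\<lambda>v. h v a) u = 0 \<longrightarrow>
                      (\<exists>e>0. \<forall>v. v \<noteq> u \<and> \<bar>v - u\<bar> < e \<longrightarrow> deriv (\<lambda>w. h w a) v \<noteq> 0)"
    and h_lim: "\<forall>a\<ge>0. filterlim (\<lambda>u. h u a) at_bot at_infinity"
    and kt_def: "kt = (\<lambda>n. if n = 0 then deriv k 0 else k n / n)"
    and f_def: "f = (\<lambda>(u, n) a. (eps * (deriv (\<lambda>v. b v a) u - deriv c u * n),
                                 (b u a - c u * n) / kt n))"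
    and astar_def: "astar = (\<lambda>u. (deriv b0 u * c u - b0 u * deriv c u) /
                                 (deriv b1 u * c u - b1 u * deriv c u))"
    and hstar_def: "hstar = (\<lambda>u. h u (astar u))"
  shows "{((u, n), a). f (u, n) a = 0} = {((u, n), a). a = astar u \<and> n = hstar u}
    \<and> {((u, n), a). f (u, n) a = 0} =
        {((u, n), a). f (u, n) a = 0 \<and> deriv astar u > 0}
      \<union> {((u, n), a). f (u, n) a = 0 \<and> deriv astar u < 0}
      \<union> {((u, n), a). f (u, n) a = 0 \<and> deriv astar u = 0}
    \<and> {((u, n), a). f (u, n) a = 0 \<and> deriv astar u > 0} \<noteq> {}
    \<and> (\<forall>u n a. f (u, n) a = 0 \<and> deriv astar u > 0 \<longrightarrow> stable_node (\<lambda>x. f x a) (u, n))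
    \<and> (\<forall>u n a. f (u, n) a = 0 \<and> deriv astar u < 0 \<longrightarrow> saddle (\<lambda>x. f x a) (u, n))
    \<and> (\<forall>u n a. f (u, n) a = 0 \<and> deriv astar u = 0 \<longrightarrow> isolated_nonhyperbolic_eq (\<lambda>x. f x a) (u, n))
    \<and> (\<forall>u n a. f (u, n) a = 0 \<and> deriv astar u = 0 \<and> deriv (deriv astar) u \<noteq> 0 \<longrightarrow>
         generic_fold f (u, n) a)"
proof -
  define B01 where "B01 = deriv b0"
  define B02 where "B02 = deriv B01"
  define B03 where "B03 = deriv B02"
  define B11 where "B11 = deriv b1"
  define B12 where "B12 = deriv B11"
  define B13 where "B13 = deriv B12"
  define C1 where "C1 = deriv c"
  define C2 where "C2 = deriv C1"
  define C3 where "C3 = deriv C2"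
  have db0: "\<And>x. DERIV b0 x :> B01 x" "\<And>x. DERIV B01 x :> B02 x" "\<And>x. DERIV B02 x :> B03 x"
    using sm0 sm1 sm2 smooth(1) unfolding B01_def B02_def B03_def by auto
  have db1: "\<And>x. DERIV b1 x :> B11 x" "\<And>x. DERIV B11 x :> B12 x" "\<And>x. DERIV B12 x :> B13 x"
    using sm0 sm1 sm2 smooth(2) unfolding B11_def B12_def B13_def by auto
  have dc: "\<And>x. DERIV c x :> C1 x" "\<And>x. DERIV C1 x :> C2 x" "\<And>x. DERIV C2 x :> C3 x"
    using sm0 sm1 sm2 smooth(3) unfolding C1_def C2_def C3_def by auto
  define N where "N = (\<lambda>x. B01 x * c x - b0 x * C1 x)"
  define D where "D = (\<lambda>x. B11 x * c x - b1 x * C1 x)"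
  have cp: "\<And>x. c x > 0" using c_pos by auto
  have b1p: "\<And>x. b1 x > 0" using b1_pos by auto
  have Dneg: "\<And>x. D x < 0"
  proof -
    fix x
    have "B11 x / b1 x < C1 x / c x" using c_b1 unfolding B11_def C1_def by auto
    then have "B11 x * c x < C1 x * b1 x" using cp[of x] b1p[of x] by (simp add: field_simps)
    then show "D x < 0" unfolding D_def by (simp add: algebra_simps)
  qed
  have Dnz: "\<And>x. D x \<noteq> 0" using Dneg by (metis less_irrefl)
  have astar_eq: "astar = (\<lambda>x. N x / D x)"
    unfolding astar_def N_def D_def B01_def B11_def C1_def ..
  have ktc: "\<And>x. isCont kt x" and ktp: "\<And>x. kt x > 0"
    using kt_facts[OF k_C1 k_zero k'0] kt_def by auto
  have ktnz: "\<And>x. kt x \<noteq> 0" using ktp by (metis less_irrefl)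
  have bder: "\<And>a u. deriv (\<lambda>v. b0 v - a * b1 v) u = B01 u - a * B11 u"
    by (rule DERIV_imp_deriv) (auto intro!: derivative_eq_intros db0 db1)
  have f_eq: "\<And>u n a. f (u, n) a = (eps * (B01 u - a * B11 u - C1 u * n), (b0 u - a * b1 u - c u * n) / kt n)"
    by (simp add: f_def b_def bder C1_def)
  have hder: "\<And>a u. DERIV (\<lambda>v. h v a) u :> (N u - a * D u) / (c u)^2"
  proof -
    fix a u
    have "DERIV (\<lambda>v. (b0 v - a * b1 v) / c v) u :> ((B01 u - a * B11 u) * c u - (b0 u - a * b1 u) * C1 u) / (c u * c u)"
      using cp[of u] by (auto intro!: derivative_eq_intros db0 db1 dc)
    moreover have "((B01 u - a * B11 u) * c u - (b0 u - a * b1 u) * C1 u) / (c u * c u) = (N u - a * D u) / (c u)^2"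
      unfolding N_def D_def by (simp add: algebra_simps power2_eq_square)
    ultimately show "DERIV (\<lambda>v. h v a) u :> (N u - a * D u) / (c u)^2"
      by (simp add: h_def b_def)
  qed
  have eq_iff: "\<And>u n a. f (u, n) a = 0 \<longleftrightarrow> B01 u - a * B11 u - C1 u * n = 0 \<and> b0 u - a * b1 u - c u * n = 0"
    using eps ktnz by (auto simp: f_eq zero_prod_def)
  have zero_iff: "\<And>u n a. f (u, n) a = 0 \<longleftrightarrow> a = astar u \<and> n = hstar u"
  proof -
    fix u n a
    have key: "c u * (B01 u - a * B11 u - C1 u * ((b0 u - a * b1 u) / c u)) = N u - a * D u"
      using cp[of u] unfolding N_def D_def by (simp add: field_simps)
    have e2: "b0 u - a * b1 u - c u * n = 0 \<longleftrightarrow> n = (b0 u - a * b1 u) / c u"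
      using cp[of u] by (auto simp: field_simps)
    have e3: "N u - a * D u = 0 \<longleftrightarrow> a = astar u"
      using Dnz[of u] by (auto simp: astar_eq field_simps)
    show "f (u, n) a = 0 \<longleftrightarrow> a = astar u \<and> n = hstar u"
      unfolding eq_iff e2
    proof (intro iffI conjI)
      assume A: "B01 u - a * B11 u - C1 u * n = 0 \<and> n = (b0 u - a * b1 u) / c u"
      then have "N u - a * D u = 0" using key by simp
      then show aa: "a = astar u" using e3 by simp
      show "n = hstar u" using A aa by (simp add: hstar_def h_def b_def)
    next
      assume A: "a = astar u \<and> n = hstar u"
      then have "N u - a * D u = 0" "n = (b0 u - a * b1 u) / c u" using e3 by (auto simp: hstar_def h_def b_def)
      then show "B01 u - a * B11 u - C1 u * n = 0" "n = (b0 u - a * b1 u) / c u"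
        using key cp[of u] by auto
    qed
  qed
  define N1 where "N1 = (\<lambda>x. (B02 x * c x + B01 x * C1 x) - (B01 x * C1 x + b0 x * C2 x))"
  define D1 where "D1 = (\<lambda>x. (B12 x * c x + B11 x * C1 x) - (B11 x * C1 x + b1 x * C2 x))"
  define N2 where "N2 = (\<lambda>x. (B03 x * c x + B02 x * C1 x + (B02 x * C1 x + B01 x * C2 x)) - (B02 x * C1 x + B01 x * C2 x + (B01 x * C2 x + b0 x * C3 x)))"
  define D2 where "D2 = (\<lambda>x. (B13 x * c x + B12 x * C1 x + (B12 x * C1 x + B11 x * C2 x)) - (B12 x * C1 x + B11 x * C2 x + (B11 x * C2 x + b1 x * C3 x)))"
  have dN: "\<And>x. DERIV N x :> N1 x" unfolding N_def N1_def
    by (auto intro!: derivative_eq_intros db0 dc)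
  have dD: "\<And>x. DERIV D x :> D1 x" unfolding D_def D1_def
    by (auto intro!: derivative_eq_intros db1 dc)
  have dN1: "\<And>x. DERIV N1 x :> N2 x" unfolding N1_def N2_def
    by (auto intro!: derivative_eq_intros db0 dc)
  have dD1: "\<And>x. DERIV D1 x :> D2 x" unfolding D1_def D2_def
    by (auto intro!: derivative_eq_intros db1 dc)
  have dA: "\<And>x. DERIV astar x :> (N1 x * D x - N x * D1 x) / (D x * D x)"
    unfolding astar_eq using Dnz by (auto intro!: derivative_eq_intros dN dD)
  have dAe: "deriv astar = (\<lambda>x. (N1 x * D x - N x * D1 x) / (D x * D x))"
    using dA DERIV_imp_deriv by blast
  have dA1: "\<And>x. DERIV astar x :> deriv astar x" using dA dAe by simp
  have dA2: "\<And>x. DERIV (deriv astar) x :> deriv (deriv astar) x"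
  proof -
    fix x
    have "\<exists>d. DERIV (\<lambda>x. (N1 x * D x - N x * D1 x) / (D x * D x)) x :> d"
      by (rule exI, rule DERIV_divide, (rule DERIV_diff DERIV_mult dN dD dN1 dD1)+) (use Dnz[of x] in simp)
    then obtain d where "DERIV (deriv astar) x :> d" using dAe by auto
    then show "DERIV (deriv astar) x :> deriv (deriv astar) x"
      using DERIV_imp_deriv by metis
  qed
  have NAD: "N = (\<lambda>x. astar x * D x)" using Dnz by (auto simp: astar_eq)
  have id1: "\<And>x. N1 x = deriv astar x * D x + astar x * D1 x"
  proof -
    fix x
    have "DERIV N x :> deriv astar x * D x + astar x * D1 x"
      unfolding NAD by (auto intro!: derivative_eq_intros dA1 dD)
    then show "N1 x = deriv astar x * D x + astar x * D1 x" using dN DERIV_unique by blast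
  qed
  have id2: "\<And>x. N2 x = deriv (deriv astar) x * D x + deriv astar x * D1 x + (deriv astar x * D1 x + astar x * D2 x)"
  proof -
    fix x
    have N1e: "N1 = (\<lambda>x. deriv astar x * D x + astar x * D1 x)" using id1 by auto
    have "DERIV N1 x :> deriv (deriv astar) x * D x + deriv astar x * D1 x + (deriv astar x * D1 x + astar x * D2 x)"
      unfolding N1e by (auto intro!: derivative_eq_intros dA1 dA2 dD dD1)
    then show "N2 x = deriv (deriv astar) x * D x + deriv astar x * D1 x + (deriv astar x * D1 x + astar x * D2 x)"
      using dN1 DERIV_unique by blast
  qed
  have lam1: "\<And>u n a. f (u, n) a = 0 \<Longrightarrow> c u * (B02 u - a * B12 u - C2 u * n) = deriv astar u * D u"
  proof -
    fix u n a
    assume f0: "f (u, n) a = 0"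
    then have aa: "a = astar u" using zero_iff by blast
    have E2: "b0 u = a * b1 u + c u * n" using f0 eq_iff by simp
    have "deriv astar u * D u = N1 u - a * D1 u" using id1[of u] aa by simp
    also have "\<dots> = c u * (B02 u - a * B12 u - C2 u * n)"
      unfolding N1_def D1_def E2 by (simp add: algebra_simps)
    finally show "c u * (B02 u - a * B12 u - C2 u * n) = deriv astar u * D u" by simp
  qed
  have jac: "\<And>u n a. f (u, n) a = 0 \<Longrightarrow> ((\<lambda>x. f x a) has_derivative
      (\<lambda>h. (eps * (B02 u - a * B12 u - C2 u * n) * fst h + (- eps * C1 u) * snd h, (- c u / kt n) * snd h))) (at (u, n))"
  proof -
    fix u n a
    assume f0: "f (u, n) a = 0"
    have E1: "B01 u - a * B11 u - C1 u * n = 0" using f0 eq_iff by simp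
    have E2: "b0 u - a * b1 u - c u * n = 0" using f0 eq_iff by simp
    have F1: "((\<lambda>x. B01 (fst x)) has_derivative (\<lambda>h. B02 u * fst h)) (at (u,n))"
      using comp_fst[where g=B01 and p="(u,n)"] db0(2) by simp
    have F2: "((\<lambda>x. B11 (fst x)) has_derivative (\<lambda>h. B12 u * fst h)) (at (u,n))"
      using comp_fst[where g=B11 and p="(u,n)"] db1(2) by simp
    have F3: "((\<lambda>x. C1 (fst x)) has_derivative (\<lambda>h. C2 u * fst h)) (at (u,n))"
      using comp_fst[where g=C1 and p="(u,n)"] dc(2) by simp
    have G1: "((\<lambda>x. b0 (fst x)) has_derivative (\<lambda>h. B01 u * fst h)) (at (u,n))"
      using comp_fst[where g=b0 and p="(u,n)"] db0(1) by simp
    have G2: "((\<lambda>x. b1 (fst x)) has_derivative (\<lambda>h. B11 u * fst h)) (at (u,n))"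
      using comp_fst[where g=b1 and p="(u,n)"] db1(1) by simp
    have G3: "((\<lambda>x. c (fst x)) has_derivative (\<lambda>h. C1 u * fst h)) (at (u,n))"
      using comp_fst[where g=c and p="(u,n)"] dc(1) by simp
    have S: "((\<lambda>x. snd x) has_derivative (\<lambda>h. snd h)) (at (u,n))"
      by (rule has_derivative_snd[OF has_derivative_ident])
    have fe: "(\<lambda>x. f x a) = (\<lambda>x. (eps * (B01 (fst x) - a * B11 (fst x) - C1 (fst x) * snd x),
       (b0 (fst x) - a * b1 (fst x) - c (fst x) * snd x) * (1 / kt (snd x))))"
      by (auto simp: fun_eq_iff f_eq)
    have d1: "((\<lambda>x. eps * (B01 (fst x) - a * B11 (fst x) - C1 (fst x) * snd x)) has_derivative
       (\<lambda>h. eps * (B02 u - a * B12 u - C2 u * n) * fst h + (- eps * C1 u) * snd h)) (at (u, n))"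
      by (rule has_derivative_eq_rhs[OF has_derivative_mult_right[OF has_derivative_diff[OF
          has_derivative_diff[OF F1 has_derivative_mult_right[OF F2]] has_derivative_mult[OF F3 S]]]])
         (auto simp: fun_eq_iff algebra_simps)
    have g: "((\<lambda>x. b0 (fst x) - a * b1 (fst x) - c (fst x) * snd x) has_derivative
       (\<lambda>h. B01 u * fst h - a * (B11 u * fst h) - (C1 u * fst h * n + c u * snd h))) (at (u, n))"
      by (rule has_derivative_eq_rhs[OF has_derivative_diff[OF
          has_derivative_diff[OF G1 has_derivative_mult_right[OF G2]] has_derivative_mult[OF G3 S]]])
         (auto simp: fun_eq_iff algebra_simps)
    have m: "isCont (\<lambda>x. 1 / kt (snd x)) (u, n)"
      by (rule isCont_o2[where f=snd]) (auto intro!: continuous_intros ktc ktnz)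
    have d2: "((\<lambda>x. (b0 (fst x) - a * b1 (fst x) - c (fst x) * snd x) * (1 / kt (snd x))) has_derivative
       (\<lambda>h. (- c u / kt n) * snd h)) (at (u, n))"
      by (rule has_derivative_eq_rhs[OF has_derivative_mult_cont_zero[OF g _ m]])
         (use E1 E2 in \<open>auto simp: fun_eq_iff algebra_simps\<close>)
    show "((\<lambda>x. f x a) has_derivative
      (\<lambda>h. (eps * (B02 u - a * B12 u - C2 u * n) * fst h + (- eps * C1 u) * snd h, (- c u / kt n) * snd h))) (at (u, n))"
      unfolding fe by (rule has_derivative_Pair[OF d1 d2])
  qed
  have P1: "{((u, n), a). f (u, n) a = 0} = {((u, n), a). a = astar u \<and> n = hstar u}"
    using zero_iff by auto
  have P2: "{((u, n), a). f (u, n) a = 0} =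
        {((u, n), a). f (u, n) a = 0 \<and> deriv astar u > 0}
      \<union> {((u, n), a). f (u, n) a = 0 \<and> deriv astar u < 0}
      \<union> {((u, n), a). f (u, n) a = 0 \<and> deriv astar u = 0}"
    by auto
  have P3: "{((u, n), a). f (u, n) a = 0 \<and> deriv astar u > 0} \<noteq> {}"
  proof -
    have h0: "\<And>x. DERIV (\<lambda>v. h v 0) x :> N x / (c x)^2" using hder[of 0] by simp
    have "\<forall>Z. eventually (\<lambda>x. h x 0 \<le> Z) at_infinity"
      using h_lim[rule_format, of 0] unfolding filterlim_at_bot by simp
    then have "eventually (\<lambda>x. h x 0 \<le> h 0 0 - 1) at_infinity" by blast
    then obtain B where B: "\<And>x. B \<le> norm x \<Longrightarrow> h x 0 \<le> h 0 0 - 1"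
      unfolding eventually_at_infinity by blast
    define x1 where "x1 = \<bar>B\<bar> + 1"
    have x1p: "x1 > 0" unfolding x1_def by simp
    have hx1: "h x1 0 \<le> h 0 0 - 1" using B[of x1] unfolding x1_def by simp
    have hx2: "h (- x1) 0 \<le> h 0 0 - 1" using B[of "- x1"] unfolding x1_def by simp
    obtain z1 where z1: "0 < z1" "z1 < x1" "h x1 0 - h 0 0 = (x1 - 0) * (N z1 / (c z1)^2)"
      using MVT2[OF x1p h0] by blast
    obtain z2 where z2: "- x1 < z2" "z2 < 0" "h 0 0 - h (- x1) 0 = (0 - (- x1)) * (N z2 / (c z2)^2)"
      using MVT2[of "- x1" 0, OF _ h0] x1p by auto
    have "x1 * (N z1 / (c z1)^2) < 0" using z1 hx1 by simp
    then have "x1 * N z1 / (c z1)^2 < 0" by simp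
    then have "x1 * N z1 < 0" using cp[of z1] by (simp add: divide_less_0_iff)
    then have Nz1: "N z1 < 0" using x1p by (simp add: mult_less_0_iff)
    have "x1 * (N z2 / (c z2)^2) > 0" using z2 hx2 by simp
    then have "x1 * N z2 / (c z2)^2 > 0" by simp
    then have "x1 * N z2 > 0" using cp[of z2] by (simp add: zero_less_divide_iff)
    then have Nz2: "N z2 > 0" using x1p by (simp add: zero_less_mult_iff)
    have a1: "astar z1 > 0" using Nz1 Dneg[of z1] by (simp add: astar_eq divide_neg_neg)
    have a2: "astar z2 < 0" using Nz2 Dneg[of z2] by (simp add: astar_eq divide_pos_neg)
    have zz: "z2 < z1" using z1 z2 by simp
    obtain t where t: "z2 < t" "t < z1" "astar z1 - astar z2 = (z1 - z2) * deriv astar t"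
      using MVT2[OF zz dA1] by blast
    have "(z1 - z2) * deriv astar t > 0" using t(3) a1 a2 by simp
    then have tp: "deriv astar t > 0" using zz by (simp add: zero_less_mult_iff)
    have "f (t, hstar t) (astar t) = 0" using zero_iff by simp
    then have "((t, hstar t), astar t) \<in> {((u, n), a). f (u, n) a = 0 \<and> deriv astar u > 0}"
      using tp by simp
    then show ?thesis by blast
  qed
  have sgnA: "\<And>u n a. f (u, n) a = 0 \<Longrightarrow> sgn (eps * (B02 u - a * B12 u - C2 u * n)) = - sgn (deriv astar u)"
  proof -
    fix u n a
    assume f0: "f (u, n) a = 0"
    have e: "c u * (B02 u - a * B12 u - C2 u * n) = deriv astar u * D u" using lam1[OF f0] .
    have "sgn (c u * (B02 u - a * B12 u - C2 u * n)) = sgn (B02 u - a * B12 u - C2 u * n)"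
      using cp[of u] by (simp add: sgn_mult)
    moreover have "sgn (deriv astar u * D u) = - sgn (deriv astar u)"
      using Dneg[of u] by (simp add: sgn_mult)
    ultimately show "sgn (eps * (B02 u - a * B12 u - C2 u * n)) = - sgn (deriv astar u)"
      using e eps by (simp add: sgn_mult)
  qed
  have Cneg: "\<And>u n. - c u / kt n < 0" using cp ktp by (simp add: divide_pos_pos)
  have P4: "\<forall>u n a. f (u, n) a = 0 \<and> deriv astar u > 0 \<longrightarrow> stable_node (\<lambda>x. f x a) (u, n)"
  proof (intro allI impI)
    fix u n a
    assume A: "f (u, n) a = 0 \<and> deriv astar u > 0"
    have "sgn (eps * (B02 u - a * B12 u - C2 u * n)) = -1" using sgnA[of u n a] A by simp
    then have An: "eps * (B02 u - a * B12 u - C2 u * n) < 0" by (simp add: sgn_1_neg)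
    show "stable_node (\<lambda>x. f x a) (u, n)"
      unfolding stable_node_def
    proof (intro conjI exI)
      show "f (u, n) a = 0" using A by simp
      show "((\<lambda>x. f x a) has_derivative
        (\<lambda>h. (eps * (B02 u - a * B12 u - C2 u * n) * fst h + (- eps * C1 u) * snd h, (- c u / kt n) * snd h))) (at (u, n))"
        using jac A by blast
      show "\<forall>lam. eig2 (\<lambda>h. (eps * (B02 u - a * B12 u - C2 u * n) * fst h + (- eps * C1 u) * snd h, (- c u / kt n) * snd h)) lam \<longrightarrow> Im lam = 0 \<and> Re lam < 0"
        using eig2_triD An Cneg[of u n] by fastforce
    qed
  qed
  have P5: "\<forall>u n a. f (u, n) a = 0 \<and> deriv astar u < 0 \<longrightarrow> saddle (\<lambda>x. f x a) (u, n)"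
  proof (intro allI impI)
    fix u n a
    assume A: "f (u, n) a = 0 \<and> deriv astar u < 0"
    have "sgn (eps * (B02 u - a * B12 u - C2 u * n)) = 1" using sgnA[of u n a] A by simp
    then have Ap: "eps * (B02 u - a * B12 u - C2 u * n) > 0" by (simp add: sgn_1_pos)
    have ne: "eps * (B02 u - a * B12 u - C2 u * n) \<noteq> - c u / kt n" using Ap Cneg[of u n] by simp
    show "saddle (\<lambda>x. f x a) (u, n)"
      unfolding saddle_def
    proof (intro conjI exI)
      show "f (u, n) a = 0" using A by simp
      show "((\<lambda>x. f x a) has_derivative
        (\<lambda>h. (eps * (B02 u - a * B12 u - C2 u * n) * fst h + (- eps * C1 u) * snd h, (- c u / kt n) * snd h))) (at (u, n))"
        using jac A by blast
      show "eig2 (\<lambda>h. (eps * (B02 u - a * B12 u - C2 u * n) * fst h + (- eps * C1 u) * snd h, (- c u / kt n) * snd h)) (complex_of_real (- c u / kt n))"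
        by (rule eig2_triC[OF ne])
      show "eig2 (\<lambda>h. (eps * (B02 u - a * B12 u - C2 u * n) * fst h + (- eps * C1 u) * snd h, (- c u / kt n) * snd h)) (complex_of_real (eps * (B02 u - a * B12 u - C2 u * n)))"
        by (rule eig2_triA)
    qed (use Ap Cneg[of u n] in auto)
  qed
  have Azero: "\<And>u n a. f (u, n) a = 0 \<Longrightarrow> deriv astar u = 0 \<Longrightarrow> B02 u - a * B12 u - C2 u * n = 0"
  proof -
    fix u n a assume f0: "f (u, n) a = 0" and z: "deriv astar u = 0"
    have "c u * (B02 u - a * B12 u - C2 u * n) = 0" using lam1[OF f0] z by simp
    then show "B02 u - a * B12 u - C2 u * n = 0" using cp[of u] by simp
  qed
  have P6: "\<forall>u n a. f (u, n) a = 0 \<and> deriv astar u = 0 \<longrightarrow> isolated_nonhyperbolic_eq (\<lambda>x. f x a) (u, n)"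
  proof (intro allI impI)
    fix u n a
    assume A: "f (u, n) a = 0 \<and> deriv astar u = 0"
    have A0: "B02 u - a * B12 u - C2 u * n = 0" using Azero A by blast
    have aa: "a = astar u" and nn: "n = hstar u" using A zero_iff by auto
    have crit: "\<And>v. deriv (\<lambda>w. h w a) v = 0 \<longleftrightarrow> a = astar v"
    proof -
      fix v
      have "deriv (\<lambda>w. h w a) v = (N v - a * D v) / (c v)^2" using hder DERIV_imp_deriv by blast
      then show "deriv (\<lambda>w. h w a) v = 0 \<longleftrightarrow> a = astar v"
        using cp[of v] Dnz[of v] by (auto simp: astar_eq field_simps)
    qed
    obtain e where e: "e > 0" "\<And>v. v \<noteq> u \<and> \<bar>v - u\<bar> < e \<Longrightarrow> deriv (\<lambda>w. h w a) v \<noteq> 0"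
      using crit_iso crit[of u] aa by blast
    show "isolated_nonhyperbolic_eq (\<lambda>x. f x a) (u, n)"
      unfolding isolated_nonhyperbolic_eq_def
    proof (intro conjI exI)
      show "f (u, n) a = 0" using A by simp
      show "e > 0" by (rule e(1))
      show "\<forall>y. y \<noteq> (u, n) \<and> dist y (u, n) < e \<longrightarrow> f y a \<noteq> 0"
      proof (intro allI impI)
        fix y assume y: "y \<noteq> (u, n) \<and> dist y (u, n) < e"
        obtain u' n' where yy: "y = (u', n')" by (cases y)
        show "f y a \<noteq> 0"
        proof
          assume "f y a = 0"
          then have a': "a = astar u'" and n': "n' = hstar u'" using zero_iff yy by auto
          show False
          proof (cases "u' = u")
            case True then show False using y yy n' nn by simp
          next
            case False
            have "\<bar>u' - u\<bar> \<le> dist y (u, n)" using dist_fst_le[of y "(u, n)"] yy by (simp add: dist_real_def)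
            then have "\<bar>u' - u\<bar> < e" using y by simp
            then show False using e(2)[of u'] False crit[of u'] a' by blast
          qed
        qed
      qed
      show "((\<lambda>x. f x a) has_derivative
        (\<lambda>h. (eps * (B02 u - a * B12 u - C2 u * n) * fst h + (- eps * C1 u) * snd h, (- c u / kt n) * snd h))) (at (u, n))"
        using jac A by blast
      show "eig2 (\<lambda>h. (eps * (B02 u - a * B12 u - C2 u * n) * fst h + (- eps * C1 u) * snd h, (- c u / kt n) * snd h)) (complex_of_real (eps * (B02 u - a * B12 u - C2 u * n)))"
        by (rule eig2_triA)
      show "Re (complex_of_real (eps * (B02 u - a * B12 u - C2 u * n))) = 0" using A0 by simp
    qed
  qed
  have P7: "\<forall>u n a. f (u, n) a = 0 \<and> deriv astar u = 0 \<and> deriv (deriv astar) u \<noteq> 0 \<longrightarrow>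
         generic_fold f (u, n) a"
  proof (intro allI impI)
    fix u n a
    assume A: "f (u, n) a = 0 \<and> deriv astar u = 0 \<and> deriv (deriv astar) u \<noteq> 0"
    have f0: "f (u, n) a = 0" using A by simp
    have A0: "B02 u - a * B12 u - C2 u * n = 0" using Azero A by blast
    have aa: "a = astar u" using f0 zero_iff by auto
    have E1: "B01 u = a * B11 u + C1 u * n" using f0 eq_iff by simp
    have E2: "b0 u = a * b1 u + c u * n" using f0 eq_iff by simp
    have E3: "B02 u = a * B12 u + C2 u * n" using A0 by simp
    define Y where "Y = B03 u - a * B13 u - C3 u * n"
    have Yeq: "c u * Y = deriv (deriv astar) u * D u"
    proof -
      have "deriv (deriv astar) u * D u = N2 u - a * D2 u" using id2[of u] A aa by simp
      also have "\<dots> = c u * Y"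
        unfolding N2_def D2_def Y_def E1 E2 E3 by (simp add: algebra_simps)
      finally show ?thesis by simp
    qed
    have Ynz: "Y \<noteq> 0" using Yeq A Dnz[of u] by auto
    define L where "L = (\<lambda>h::real\<times>real. (eps * (B02 u - a * B12 u - C2 u * n) * fst h + (- eps * C1 u) * snd h, (- c u / kt n) * snd h))"
    have LA: "L = (\<lambda>h. (0 * fst h + (- eps * C1 u) * snd h, (- c u / kt n) * snd h))"
      unfolding L_def using A0 by simp
    have Cnz: "- c u / kt n \<noteq> 0" using Cneg[of u n] by linarith
    have ne: "(0::real) \<noteq> - c u / kt n" using Cnz by simp
    define p where "p = (1::real, - eps * C1 u * kt n / c u)"
    define q where "q = (1::real, 0::real)"
    define g1 where "g1 = (\<lambda>s. (eps * (B02 (u + s) - a * B12 (u + s) - C2 (u + s) * n),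
                          (B01 (u + s) - a * B11 (u + s) - C1 (u + s) * n) / kt n))"
    define Bv where "Bv = (eps * (B03 u - a * B13 u - C3 u * n), (B02 u - a * B12 u - C2 u * n) / kt n)"
    define Fa where "Fa = (eps * (- B11 u), - b1 u / kt n)"
    show "generic_fold f (u, n) a"
      unfolding generic_fold_def
    proof (intro conjI exI[of _ L])
      show "f (u, n) a = 0" by (rule f0)
      show "((\<lambda>x. f x a) has_derivative L) (at (u, n))" unfolding L_def using jac f0 by blast
      show "eig2 L 0" unfolding LA using eig2_triA[of 0 "- eps * C1 u" "- c u / kt n"] by simp
      show "\<exists>mu. eig2 L mu \<and> mu \<noteq> 0"
        unfolding LA using eig2_triC[OF ne, of "- eps * C1 u"] Cnz by auto
      show "\<forall>mu. eig2 L mu \<longrightarrow> mu = 0 \<or> Re mu \<noteq> 0"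
      proof (intro allI impI)
        fix mu assume "eig2 L mu"
        then have "mu = complex_of_real 0 \<or> mu = complex_of_real (- c u / kt n)"
          unfolding LA by (rule eig2_triD)
        then show "mu = 0 \<or> Re mu \<noteq> 0"
        proof
          assume "mu = complex_of_real 0" then show ?thesis by simp
        next
          assume "mu = complex_of_real (- c u / kt n)"
          then have "Re mu = - c u / kt n" by (simp only: Re_complex_of_real)
          then show ?thesis using Cnz by simp
        qed
      qed
      show "\<exists>p q. q \<noteq> 0 \<and> L q = 0 \<and> (\<forall>w. dot2 p (L w) = 0) \<and> dot2 p q = 1 \<and>
           (\<exists>g1 B e. e > 0 \<and>
              (\<forall>s. \<bar>s\<bar> < e \<longrightarrow> ((\<lambda>s. f ((u, n) + s *\<^sub>R q) a) has_vector_derivative g1 s) (at s)) \<and>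
              (g1 has_vector_derivative B) (at 0) \<and> dot2 p B \<noteq> 0) \<and>
           (\<exists>Fa. ((\<lambda>a. f (u, n) a) has_vector_derivative Fa) (at a) \<and> dot2 p Fa \<noteq> 0)"
      proof (rule exI[of _ p], rule exI[of _ q], intro conjI)
        show "q \<noteq> 0" unfolding q_def by (simp add: zero_prod_def)
        show "L q = 0" unfolding LA q_def by (simp add: zero_prod_def)
        show "\<forall>w. dot2 p (L w) = 0" unfolding LA p_def dot2_def
          using cp[of u] ktnz[of n] by (auto simp: field_simps)
        show "dot2 p q = 1" unfolding p_def q_def dot2_def by simp
        show "\<exists>g1 B e. e > 0 \<and>
              (\<forall>s. \<bar>s\<bar> < e \<longrightarrow> ((\<lambda>s. f ((u, n) + s *\<^sub>R q) a) has_vector_derivative g1 s) (at s)) \<and>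
              (g1 has_vector_derivative B) (at 0) \<and> dot2 p B \<noteq> 0"
        proof (intro exI[of _ g1] exI[of _ Bv] exI[of _ "1::real"] conjI allI impI)
          show "(0::real) < 1" by simp
          fix s :: real
          have fe: "(\<lambda>s. f ((u, n) + s *\<^sub>R q) a) = (\<lambda>s. (eps * (B01 (u + s) - a * B11 (u + s) - C1 (u + s) * n),
               (b0 (u + s) - a * b1 (u + s) - c (u + s) * n) / kt n))"
            unfolding q_def by (simp add: f_eq)
          have d1: "DERIV (\<lambda>s. eps * (B01 (u + s) - a * B11 (u + s) - C1 (u + s) * n)) s :>
              eps * (B02 (u + s) - a * B12 (u + s) - C2 (u + s) * n)"
            by (rule DERIV_cmult[OF DERIV_diff[OF DERIV_diff[OF shiftD[OF db0(2)] DERIV_cmult[OF shiftD[OF db1(2)]]]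
                   DERIV_cmult_right[OF shiftD[OF dc(2)]]]])
          have d2: "DERIV (\<lambda>s. (b0 (u + s) - a * b1 (u + s) - c (u + s) * n) / kt n) s :>
              (B01 (u + s) - a * B11 (u + s) - C1 (u + s) * n) / kt n"
            by (rule DERIV_cdivide[OF DERIV_diff[OF DERIV_diff[OF shiftD[OF db0(1)] DERIV_cmult[OF shiftD[OF db1(1)]]]
                   DERIV_cmult_right[OF shiftD[OF dc(1)]]]])
          show "((\<lambda>s. f ((u, n) + s *\<^sub>R q) a) has_vector_derivative g1 s) (at s)"
            unfolding fe g1_def using d1 d2
            by (intro has_vector_derivative_Pair) (auto simp: has_real_derivative_iff_has_vector_derivative)
        next
          have d1: "DERIV (\<lambda>s. eps * (B02 (u + s) - a * B12 (u + s) - C2 (u + s) * n)) 0 :>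
              eps * (B03 (u + 0) - a * B13 (u + 0) - C3 (u + 0) * n)"
            by (rule DERIV_cmult[OF DERIV_diff[OF DERIV_diff[OF shiftD[OF db0(3)] DERIV_cmult[OF shiftD[OF db1(3)]]]
                   DERIV_cmult_right[OF shiftD[OF dc(3)]]]])
          have d2: "DERIV (\<lambda>s. (B01 (u + s) - a * B11 (u + s) - C1 (u + s) * n) / kt n) 0 :>
              (B02 (u + 0) - a * B12 (u + 0) - C2 (u + 0) * n) / kt n"
            by (rule DERIV_cdivide[OF DERIV_diff[OF DERIV_diff[OF shiftD[OF db0(2)] DERIV_cmult[OF shiftD[OF db1(2)]]]
                   DERIV_cmult_right[OF shiftD[OF dc(2)]]]])
          show "(g1 has_vector_derivative Bv) (at 0)"
            unfolding g1_def Bv_def using d1 d2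
            by (intro has_vector_derivative_Pair) (auto simp: has_real_derivative_iff_has_vector_derivative)
          show "dot2 p Bv \<noteq> 0"
            unfolding p_def Bv_def dot2_def using A0 Ynz eps by (simp add: Y_def)
        qed
        show "\<exists>Fa. ((\<lambda>a. f (u, n) a) has_vector_derivative Fa) (at a) \<and> dot2 p Fa \<noteq> 0"
        proof (intro exI[of _ Fa] conjI)
          have fe: "(\<lambda>a. f (u, n) a) = (\<lambda>a. (eps * (B01 u - a * B11 u - C1 u * n), (b0 u - a * b1 u - c u * n) / kt n))"
            by (simp add: f_eq)
          have d1: "DERIV (\<lambda>a. eps * (B01 u - a * B11 u - C1 u * n)) a :> eps * (- B11 u)"
            by (auto intro!: derivative_eq_intros)
          have d2: "DERIV (\<lambda>a. (b0 u - a * b1 u - c u * n) / kt n) a :> - b1 u / kt n"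
            using ktnz[of n] by (auto intro!: derivative_eq_intros)
          show "((\<lambda>a. f (u, n) a) has_vector_derivative Fa) (at a)"
            unfolding fe Fa_def using d1 d2
            by (intro has_vector_derivative_Pair) (auto simp: has_real_derivative_iff_has_vector_derivative)
          have "dot2 p Fa = eps * (- D u) / c u"
            unfolding p_def Fa_def dot2_def D_def using cp[of u] ktnz[of n] by (simp add: field_simps)
          moreover have "eps * (- D u) / c u > 0" using eps Dneg[of u] cp[of u] by (intro divide_pos_pos mult_pos_pos) auto
          ultimately show "dot2 p Fa \<noteq> 0" by linarith
        qed
      qed
    qed
  qed
  show ?thesis using P1 P2 P3 P4 P5 P6 P7 by blast
qed

end
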